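(* Let $k\ge 1$ and let $\mathcal P=\{p_1,\dots,p_{k^2}\}$ be a family of real polynomials in the commuting variables $x_1,\dots,x_{2k^2}$. Suppose $\mathcal P$ admits two nc representations $p(X,Y)$ and $\widetilde p(\widetilde X,\widetilde Y)$ with $p,\widetilde p\in\mathcal W$. Then there exists a $k\times k$ permutation matrix $\Pi$ such that one of the following holds: (1) $X=\Pi^T\widetilde X\Pi$ and $Y=\Pi^T\widetilde Y\Pi$; (2) $X=\Pi^T\widetilde X^T\Pi$ and $Y=\Pi^T\widetilde Y^T\Pi$; (3) $X=\Pi^T\widetilde Y\Pi$ and $Y=\Pi^T\widetilde X\Pi$; (4) $X=\Pi^T\widetilde Y^T\Pi$ and $Y=\Pi^T\widetilde X^T\Pi$.
   Context: An nc polynomial is a real linear combination of words in two noncommuting letters $X,Y$. The family $\mathcal P$ admits an nc representation $p(X,Y)$ if there are $k\times k$ matrices $X$ and $Y$ whose $2k^2$ entries are the variables $x_1,\dots,x_{2k^2}$, each used exactly once (i.e. the variables are placed into $X$ and $Y$ via a permutation of $\{1,\dots,2k^2\}$), and an nc polynomial $p$ such that the matrix $p(X,Y)$ (computed by matrix multiplication with commuting entries) is a $k\times k$ array whose entries are $p_1,\dots,p_{k^2}$, each exactly once, in some order. For integers $i,j\ge0$, $\varphi(i,j)$ denotes the sum of the coefficients of all monomials of $p$ having degree $i$ in $X$ and degree $j$ in $Y$ (equivalently, the coefficient of $x^iy^j$ in $p(xI,yI)$); $\varphi(i,j;X)$ (resp. $\varphi(i,j;Y)$) is the sum of coefficients of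 such monomials that end with $X$ (resp. with $Y$); $\varphi(X;i,j)$ (resp. $\varphi(Y;i,j)$) is the sum of coefficients of such monomials that begin with $X$ (resp. with $Y$). $\mathcal W$ is the set of nc polynomials $p$ of degree $d>1$ for which there exists an integer $t\ge2$ with $\varphi(t,0)\ne0$, $\varphi(0,t)\ne0$, $\varphi(t,0)\ne\varphi(0,t)$, and at least one of: (1) $t\varphi(t,0)\ne\varphi(t-1,1)$; (2) $t\varphi(0,t)\ne\varphi(1,t-1)$; (3) $\varphi(t-1,1;Y)\ne0$ and $\varphi(t,0)\ne\varphi(t-1,1;Y)$; (4) $\varphi(Y;t-1,1)\ne0$ and $\varphi(t,0)\ne\varphi(Y;t-1,1)$; (5) $\varphi(1,t-1;X)\ne0$ and $\varphi(0,t)\ne\varphi(1,t-1;X)$; (6) $\varphi(X;1,t-1)\ne0$ and $\varphi(0,t)\ne\varphi(X;1,t-1)$. *)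

theory Defs
  imports Complex_Main "HOL-Library.Poly_Mapping" "HOL-Combinatorics.Permutations"
begin

text \<open>Commutative real polynomials in the variables x_0, x_1, ... (0-based indexing):
  monomials are finitely supported exponent vectors finitely supported nat-to-nat maps.\<close>
type_synonym cpoly = "(nat \<Rightarrow>\<^sub>0 nat) \<Rightarrow>\<^sub>0 real"

definition cvar :: "nat \<Rightarrow> cpoly" where
  "cvar i = Poly_Mapping.single (Poly_Mapping.single i 1) 1"

definition cconst :: "real \<Rightarrow> cpoly" where
  "cconst c = Poly_Mapping.single 0 c"

text \<open>nc polynomials: finitely supported real coefficients on words in two letters;
  True stands for the letter X, False for the letter Y.\<close>
type_synonym ncpoly = "bool list \<Rightarrow>\<^sub>0 real"

text \<open>k x k matrices as functions on indices; only entries with indices < k matter.\<close>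
type_synonym 'a mat = "nat \<Rightarrow> nat \<Rightarrow> 'a"

definition mat_mult :: "nat \<Rightarrow> 'a::comm_semiring_1 mat \<Rightarrow> 'a mat \<Rightarrow> 'a mat" where
  "mat_mult k A B = (\<lambda>i j. \<Sum>l<k. A i l * B l j)"

definition mat_one :: "'a::comm_semiring_1 mat" where
  "mat_one = (\<lambda>i j. if i = j then 1 else 0)"

definition mat_transpose :: "'a mat \<Rightarrow> 'a mat" where
  "mat_transpose A = (\<lambda>i j. A j i)"

definition mat_eq :: "nat \<Rightarrow> 'a mat \<Rightarrow> 'a mat \<Rightarrow> bool" where
  "mat_eq k A B \<longleftrightarrow> (\<forall>i<k. \<forall>j<k. A i j = B i j)"

fun word_eval :: "nat \<Rightarrow> 'a::comm_semiring_1 mat \<Rightarrow> 'a mat \<Rightarrow> bool list \<Rightarrow> 'a mat" where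
  "word_eval k X Y [] = mat_one"
| "word_eval k X Y (b # w) = mat_mult k (if b then X else Y) (word_eval k X Y w)"

definition nc_eval :: "nat \<Rightarrow> ncpoly \<Rightarrow> cpoly mat \<Rightarrow> cpoly mat \<Rightarrow> cpoly mat" where
  "nc_eval k p X Y = (\<lambda>i j. \<Sum>w\<in>Poly_Mapping.keys p. cconst (Poly_Mapping.lookup p w) * word_eval k X Y w i j)"

definition var_mat :: "(bool \<Rightarrow> nat \<Rightarrow> nat \<Rightarrow> nat) \<Rightarrow> bool \<Rightarrow> cpoly mat" where
  "var_mat s b = (\<lambda>i j. cvar (s b i j))"

definition nc_rep :: "nat \<Rightarrow> (nat \<Rightarrow> cpoly) \<Rightarrow> (bool \<Rightarrow> nat \<Rightarrow> nat \<Rightarrow> nat) \<Rightarrow> ncpoly \<Rightarrow> bool" where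
  "nc_rep k P s p \<longleftrightarrow>
     bij_betw (\<lambda>(b, i, j). s b i j) (UNIV \<times> {..<k} \<times> {..<k}) {..<2 * k^2} \<and>
     (\<exists>\<tau>. bij_betw \<tau> ({..<k} \<times> {..<k}) {..<k^2} \<and>
        (\<forall>i<k. \<forall>j<k. nc_eval k p (var_mat s True) (var_mat s False) i j = P (\<tau> (i, j))))"

definition nc_degree :: "ncpoly \<Rightarrow> nat" where
  "nc_degree p = Max (length ` Poly_Mapping.keys p)"

definition phiQ :: "ncpoly \<Rightarrow> (bool list \<Rightarrow> bool) \<Rightarrow> nat \<Rightarrow> nat \<Rightarrow> real" where
  "phiQ p Q i j = (\<Sum>w\<in>{w\<in>Poly_Mapping.keys p. count_list w True = i \<and> count_list w False = j \<and> Q w}. Poly_Mapping.lookup p w)"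

definition phi :: "ncpoly \<Rightarrow> nat \<Rightarrow> nat \<Rightarrow> real" where
  "phi p i j = phiQ p (\<lambda>_. True) i j"

definition phi_end :: "ncpoly \<Rightarrow> bool \<Rightarrow> nat \<Rightarrow> nat \<Rightarrow> real" where
  "phi_end p b i j = phiQ p (\<lambda>w. w \<noteq> [] \<and> last w = b) i j"

definition phi_begin :: "ncpoly \<Rightarrow> bool \<Rightarrow> nat \<Rightarrow> nat \<Rightarrow> real" where
  "phi_begin p b i j = phiQ p (\<lambda>w. w \<noteq> [] \<and> hd w = b) i j"

definition classW :: "ncpoly set" where
  "classW = {p. nc_degree p > 1 \<and>
     (\<exists>t\<ge>2. phi p t 0 \<noteq> 0 \<and> phi p 0 t \<noteq> 0 \<and> phi p t 0 \<noteq> phi p 0 t \<and>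
        (real t * phi p t 0 \<noteq> phi p (t - 1) 1
         \<or> real t * phi p 0 t \<noteq> phi p 1 (t - 1)
         \<or> (phi_end p False (t - 1) 1 \<noteq> 0 \<and> phi p t 0 \<noteq> phi_end p False (t - 1) 1)
         \<or> (phi_begin p False (t - 1) 1 \<noteq> 0 \<and> phi p t 0 \<noteq> phi_begin p False (t - 1) 1)
         \<or> (phi_end p True 1 (t - 1) \<noteq> 0 \<and> phi p 0 t \<noteq> phi_end p True 1 (t - 1))
         \<or> (phi_begin p True 1 (t - 1) \<noteq> 0 \<and> phi p 0 t \<noteq> phi_begin p True 1 (t - 1))))}"

definition is_perm_mat :: "nat \<Rightarrow> 'a::zero_neq_one mat \<Rightarrow> bool" where
  "is_perm_mat k M \<longleftrightarrow> (\<exists>\<pi>. \<pi> permutes {..<k} \<and>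
      (\<forall>i<k. \<forall>j<k. M i j = (if \<pi> i = j then 1 else 0)))"

definition conj_perm :: "nat \<Rightarrow> 'a::comm_semiring_1 mat \<Rightarrow> 'a mat \<Rightarrow> 'a mat" where
  "conj_perm k Q A = mat_mult k (mat_mult k (mat_transpose Q) A) Q"

end

theory Submission
  imports Defs
begin


definition walks :: "nat \<Rightarrow> nat \<Rightarrow> nat \<Rightarrow> nat \<Rightarrow> nat list set" where
  "walks k n r r' = {vs. length vs = n \<and> set vs \<subseteq> {..<k} \<and> last (r # vs) = r'}"

definition trip :: "bool list \<Rightarrow> nat \<Rightarrow> nat list \<Rightarrow> (bool \<times> nat \<times> nat) list" where
  "trip w r vs = zip w (zip (r # vs) vs)"

definition mon_of :: "nat multiset \<Rightarrow> (nat \<Rightarrow>\<^sub>0 nat)" where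
  "mon_of M = sum_mset (image_mset (\<lambda>x. Poly_Mapping.single x 1) M)"

definition wmon :: "(bool \<Rightarrow> nat \<Rightarrow> nat \<Rightarrow> nat) \<Rightarrow> bool list \<Rightarrow> nat \<Rightarrow> nat list \<Rightarrow> (nat \<Rightarrow>\<^sub>0 nat)" where
  "wmon s w r vs = mon_of (image_mset (\<lambda>(b, i, j). s b i j) (mset (trip w r vs)))"

lemma lookup_mon_of: "Poly_Mapping.lookup (mon_of M) x = count M x"
  by (induction M) (auto simp: mon_of_def lookup_add lookup_single when_def)

lemma mon_of_inj: "mon_of M = mon_of N \<Longrightarrow> M = N"
  by (metis lookup_mon_of multiset_eqI)

lemma finite_walks: "finite (walks k n r r')"
proof -
  have "walks k n r r' \<subseteq> {vs. set vs \<subseteq> {..<k} \<and> length vs = n}" by (auto simp: walks_def)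
  moreover have "finite {vs. set vs \<subseteq> {..<k} \<and> length vs = n}"
    by (rule finite_lists_length_eq) simp
  ultimately show ?thesis by (rule finite_subset)
qed

lemma walks_0: "walks k 0 r r' = (if r = r' then {[]} else {})"
  by (auto simp: walks_def)

lemma walks_Suc: "walks k (Suc n) r r' = (\<lambda>(l, vs). l # vs) ` (SIGMA l:{..<k}. walks k n l r')"
proof (intro set_eqI iffI)
  fix x assume "x \<in> walks k (Suc n) r r'"
  then obtain l vs where "x = l # vs" "l < k" "vs \<in> walks k n l r'"
    by (cases x) (auto simp: walks_def)
  then show "x \<in> (\<lambda>(l, vs). l # vs) ` (SIGMA l:{..<k}. walks k n l r')" by force
next
  fix x assume "x \<in> (\<lambda>(l, vs). l # vs) ` (SIGMA l:{..<k}. walks k n l r')"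
  then show "x \<in> walks k (Suc n) r r'" by (auto simp: walks_def)
qed

lemma trip_Cons: "trip (b # w) r (l # vs) = (b, r, l) # trip w l vs"
  by (simp add: trip_def)

lemma word_eval_walks:
  "word_eval k (var_mat s True) (var_mat s False) w r r' =
    (\<Sum>vs\<in>walks k (length w) r r'. Poly_Mapping.single (wmon s w r vs) 1)"
proof (induction w arbitrary: r)
  case Nil
  show ?case by (simp add: walks_0 mat_one_def wmon_def trip_def mon_of_def one_poly_mapping.abs_eq)
next
  case (Cons b w)
  have inj: "inj_on (\<lambda>(l, vs). l # vs) (SIGMA l:{..<k}. walks k (length w) l r')"
    by (auto simp: inj_on_def)
  have "word_eval k (var_mat s True) (var_mat s False) (b # w) r r' =
     (\<Sum>l<k. cvar (s b r l) * (\<Sum>vs\<in>walks k (length w) l r'. Poly_Mapping.single (wmon s w l vs) 1))"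
  proof -
    have "(if b then var_mat s True else var_mat s False) = var_mat s b" by simp
    then show ?thesis by (simp only: word_eval.simps mat_mult_def Cons) (simp add: var_mat_def)
  qed
  also have "\<dots> = (\<Sum>l<k. \<Sum>vs\<in>walks k (length w) l r'. Poly_Mapping.single (wmon s (b # w) r (l # vs)) 1)"
    by (simp add: sum_distrib_left cvar_def mult_single wmon_def trip_Cons mon_of_def add.commute)
  also have "\<dots> = (\<Sum>(l, vs)\<in>(SIGMA l:{..<k}. walks k (length w) l r'). Poly_Mapping.single (wmon s (b # w) r (l # vs)) 1)"
    by (rule sum.Sigma) (auto simp: finite_walks)
  also have "\<dots> = (\<Sum>vs\<in>walks k (length (b # w)) r r'. Poly_Mapping.single (wmon s (b # w) r vs) 1)"
    by (simp only: length_Cons walks_Suc sum.reindex[OF inj]) (simp add: case_prod_unfold)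
  finally show ?case .
qed



abbreviation "ncE k p s \<equiv> nc_eval k p (var_mat s True) (var_mat s False)"

lemma coeff_nc:
  "Poly_Mapping.lookup (ncE k p s r r') m =
   (\<Sum>w\<in>Poly_Mapping.keys p. Poly_Mapping.lookup p w * real (card {vs\<in>walks k (length w) r r'. wmon s w r vs = m}))"
proof -
  have h: "Poly_Mapping.lookup (cconst c * (\<Sum>vs\<in>A. Poly_Mapping.single (wmon s w r vs) 1)) m
        = c * real (card {vs\<in>A. wmon s w r vs = m})" if "finite A" for c A w
  proof -
    have "Poly_Mapping.lookup (cconst c * (\<Sum>vs\<in>A. Poly_Mapping.single (wmon s w r vs) 1)) m
       = (\<Sum>vs\<in>A. if wmon s w r vs = m then c else 0)"
      by (simp add: sum_distrib_left cconst_def mult_single lookup_sum lookup_single when_def)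
    also have "\<dots> = (\<Sum>vs\<in>{vs\<in>A. wmon s w r vs = m}. c)"
      using that by (rule sum.inter_filter[symmetric])
    finally show ?thesis by simp
  qed
  have "Poly_Mapping.lookup (ncE k p s r r') m = (\<Sum>w\<in>Poly_Mapping.keys p. Poly_Mapping.lookup (cconst (Poly_Mapping.lookup p w) * word_eval k (var_mat s True) (var_mat s False) w r r') m)"
    unfolding nc_eval_def lookup_sum by (rule refl)
  also have "\<dots> = (\<Sum>w\<in>Poly_Mapping.keys p. Poly_Mapping.lookup p w * real (card {vs\<in>walks k (length w) r r'. wmon s w r vs = m}))"
    apply (rule sum.cong[OF refl])
    apply (subst word_eval_walks)
    apply (rule h)
    apply (rule finite_walks)
    done
  finally show ?thesis .
qed

lemma coeff_zero:
  assumes "\<And>w vs. vs \<in> walks k (length w) r r' \<Longrightarrow> wmon s w r vs \<noteq> m"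
  shows "Poly_Mapping.lookup (ncE k p s r r') m = 0"
proof -
  have e: "\<And>w. {vs\<in>walks k (length w) r r'. wmon s w r vs = m} = {}" using assms by blast
  show ?thesis unfolding coeff_nc e by simp
qed

lemma coeff_uniq:
  assumes "\<And>w vs. vs \<in> walks k (length w) r r' \<Longrightarrow> wmon s w r vs = m \<Longrightarrow> w = w0 \<and> vs = vs0"
    and "vs0 \<in> walks k (length w0) r r'" and "wmon s w0 r vs0 = m"
  shows "Poly_Mapping.lookup (ncE k p s r r') m = Poly_Mapping.lookup p w0"
proof -
  have c: "card {vs\<in>walks k (length w) r r'. wmon s w r vs = m} = (if w = w0 then 1 else 0)" for w
  proof (cases "w = w0")
    case True
    then have e: "{vs\<in>walks k (length w) r r'. wmon s w r vs = m} = {vs0}" using assms(2,3) assms(1)[where w=w] by blast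
    show ?thesis unfolding e using True by simp
  next
    case False
    then have e: "{vs\<in>walks k (length w) r r'. wmon s w r vs = m} = {}" using assms(1)[where w=w] by blast
    show ?thesis unfolding e using False by simp
  qed
  show ?thesis
  proof (cases "w0 \<in> Poly_Mapping.keys p")
    case True
    have "Poly_Mapping.lookup (ncE k p s r r') m = (\<Sum>w\<in>Poly_Mapping.keys p. if w = w0 then Poly_Mapping.lookup p w else 0)"
      unfolding coeff_nc c by (rule sum.cong[OF refl]) simp
    also have "\<dots> = Poly_Mapping.lookup p w0" using True by (simp add: sum.delta)
    finally show ?thesis .
  next
    case False
    have "Poly_Mapping.lookup (ncE k p s r r') m = (\<Sum>w\<in>Poly_Mapping.keys p. if w = w0 then Poly_Mapping.lookup p w else 0)"
      unfolding coeff_nc c by (rule sum.cong[OF refl]) simp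
    also have "\<dots> = Poly_Mapping.lookup p w0" using False by (simp add: sum.delta in_keys_iff)
    finally show ?thesis .
  qed
qed



type_synonym trp = "bool \<times> nat \<times> nat"

abbreviation st :: "trp \<Rightarrow> nat" where "st e \<equiv> fst (snd e)"
abbreviation en :: "trp \<Rightarrow> nat" where "en e \<equiv> snd (snd e)"

fun chn :: "nat \<Rightarrow> trp list \<Rightarrow> bool" where
  "chn x [] = True"
| "chn x (e # T) = (st e = x \<and> chn (en e) T)"

fun endv :: "nat \<Rightarrow> trp list \<Rightarrow> nat" where
  "endv x [] = x"
| "endv x (e # T) = endv (en e) T"

lemma chn_append: "chn x (T1 @ T2) \<longleftrightarrow> chn x T1 \<and> chn (endv x T1) T2"
  by (induction T1 arbitrary: x) auto

lemma endv_append: "endv x (T1 @ T2) = endv (endv x T1) T2"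
  by (induction T1 arbitrary: x) auto

lemma endv_last: "T \<noteq> [] \<Longrightarrow> endv x T = en (last T)"
proof (induction T arbitrary: x)
  case Nil then show ?case by simp
next
  case (Cons e T) then show ?case by (cases T) auto
qed

lemma chn_loops_fwd:
  "chn x T \<Longrightarrow> (\<forall>e\<in>set T. st e = x \<longrightarrow> en e = x) \<Longrightarrow> \<forall>e\<in>set T. st e = x \<and> en e = x"
  by (induction T) auto

lemma chn_loops_bwd:
  "chn x T \<Longrightarrow> endv x T = y \<Longrightarrow> (\<forall>e\<in>set T. en e = y \<longrightarrow> st e = y) \<Longrightarrow> \<forall>e\<in>set T. st e = y \<and> en e = y"
proof (induction T arbitrary: x)
  case Nil then show ?case by simp
next
  case (Cons e T)
  have c: "chn (en e) T" using Cons.prems(1) by simp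
  have e1: "endv (en e) T = y" using Cons.prems(2) by simp
  have h: "\<forall>e\<in>set T. en e = y \<longrightarrow> st e = y" using Cons.prems(3) by simp
  have IH: "\<forall>e\<in>set T. st e = y \<and> en e = y" using Cons.IH[OF c e1 h] .
  have "en e = y"
  proof (cases T)
    case Nil then show ?thesis using e1 by simp
  next
    case (Cons e' T')
    then have "st e' = en e" using c by simp
    moreover have "st e' = y" using IH Cons by simp
    ultimately show ?thesis by simp
  qed
  moreover have "st e = y" using Cons.prems(3) \<open>en e = y\<close> by simp
  ultimately show ?case using IH by simp
qed

lemma endv_loops: "\<forall>e\<in>set T. st e = x \<and> en e = x \<Longrightarrow> endv x T = x"
  by (induction T) auto

lemma telescope:
  "chn x T \<Longrightarrow> length (filter (\<lambda>e. en e = z) T) + (if x = z then 1 else 0)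
     = length (filter (\<lambda>e. st e = z) T) + (if endv x T = z then 1 else 0)"
proof (induction T arbitrary: x)
  case Nil then show ?case by simp
next
  case (Cons e T)
  have IH: "length (filter (\<lambda>e. en e = z) T) + (if en e = z then 1 else 0)
     = length (filter (\<lambda>e. st e = z) T) + (if endv (en e) T = z then 1 else 0)"
    using Cons by simp
  have "st e = x" using Cons.prems by simp
  then show ?case using IH by (simp split: if_splits)
qed

lemma set_replicate_sub: "set T \<subseteq> {e} \<Longrightarrow> T = replicate (length T) e"
  by (induction T) auto

lemma F1:
  assumes "chn x T" "mset T = replicate_mset n e" "n \<ge> 2"
  shows "st e = en e \<and> T = replicate n e \<and> x = st e \<and> endv x T = x"
proof -
  have "set T \<subseteq> {e}" using assms(2) by (metis set_mset_mset set_mset_replicate_mset_subset subset_singletonD subset_refl empty_subsetI)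
  moreover have "length T = n" using assms(2) by (metis size_mset size_replicate_mset)
  ultimately have T: "T = replicate n e" using set_replicate_sub by metis
  obtain n' where n': "n = Suc (Suc n')" using assms(3) by (metis add_2_eq_Suc le_iff_add)
  have "st e = en e" using assms(1) T n' by simp
  moreover have "x = st e" using assms(1) T n' by simp
  moreover have "endv x T = x" using T \<open>st e = en e\<close> \<open>x = st e\<close> by (simp add: endv_loops)
  ultimately show ?thesis using T by simp
qed

lemma mset_sub2: "mset T1 + mset T2 = replicate_mset i A + replicate_mset j B \<Longrightarrow> set T1 \<subseteq> {A, B} \<and> set T2 \<subseteq> {A, B}"
proof -
  assume h: "mset T1 + mset T2 = replicate_mset i A + replicate_mset j B"
  have "set T1 \<union> set T2 = set_mset (mset T1 + mset T2)" by simp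
  also have "\<dots> \<subseteq> {A, B}" unfolding h by (auto simp: in_replicate_mset)
  finally show ?thesis by blast
qed

lemma F2:
  assumes ab: "a \<noteq> b" and c: "chn x T"
    and m: "mset T = replicate_mset i (L0, a, a) + {#(L, a, b)#} + replicate_mset j (L0, b, b)"
  shows "T = replicate i (L0, a, a) @ (L, a, b) # replicate j (L0, b, b) \<and> x = a \<and> endv x T = b"
proof -
  define A where "A = (L0, a, a)"
  define B where "B = (L0, b, b)"
  define V where "V = (L, a, b)"
  have m': "mset T = replicate_mset i A + {#V#} + replicate_mset j B" using m by (simp add: A_def B_def V_def)
  have "V \<in> set T" using m' by (metis add_mset_add_single union_single_eq_member set_mset_mset union_iff)
  then obtain T1 T2 where T: "T = T1 @ V # T2" by (meson split_list)
  have "mset T1 + mset T2 + {#V#} = replicate_mset i A + replicate_mset j B + {#V#}"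
    using m' T by (simp add: algebra_simps)
  then have mm: "mset T1 + mset T2 = replicate_mset i A + replicate_mset j B" by (rule add_right_imp_eq)
  then have s12: "set T1 \<subseteq> {A, B}" "set T2 \<subseteq> {A, B}" using mset_sub2[OF mm] by auto
  have c1: "chn x T1" and e1: "endv x T1 = a" and c2: "chn b T2"
    using c unfolding T chn_append by (auto simp: V_def)
  have "\<forall>e\<in>set T2. st e = b \<and> en e = b"
    by (rule chn_loops_fwd[OF c2]) (use s12 ab in \<open>auto simp: A_def B_def\<close>)
  then have "set T2 \<subseteq> {B}" using s12 ab by (auto simp: A_def B_def)
  then have T2: "T2 = replicate (length T2) B" by (rule set_replicate_sub)
  have "\<forall>e\<in>set T1. st e = a \<and> en e = a"
    by (rule chn_loops_bwd[OF c1 e1]) (use s12 ab in \<open>auto simp: A_def B_def\<close>)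
  then have "set T1 \<subseteq> {A}" using s12 ab by (auto simp: A_def B_def)
  then have T1: "T1 = replicate (length T1) A" by (rule set_replicate_sub)
  have AB: "A \<noteq> B" using ab by (simp add: A_def B_def)
  have "count (mset T1 + mset T2) A = i" unfolding mm using AB by simp
  then have l1: "length T1 = i" by (subst (asm) T1, subst (asm) T2) (use AB in simp)
  have "count (mset T1 + mset T2) B = j" unfolding mm using AB by simp
  then have l2: "length T2 = j" by (subst (asm) T1, subst (asm) T2) (use AB in simp)
  have x: "x = a"
  proof (cases T1)
    case Nil then show ?thesis using e1 by simp
  next
    case (Cons e T1')
    then have "e = A" using T1 by (metis list.inject replicate_Suc length_Cons)
    then show ?thesis using c1 Cons by (simp add: A_def)
  qed
  have "endv x T = endv b T2" unfolding T endv_append using e1 by (simp add: V_def)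
  also have "\<dots> = b" using \<open>\<forall>e\<in>set T2. st e = b \<and> en e = b\<close> by (rule endv_loops)
  finally have "endv x T = b" .
  show ?thesis using T T1 T2 l1 l2 x \<open>endv x T = b\<close> by (simp add: A_def B_def V_def)
qed

lemma mset_split_single:
  assumes "mset T = M + {#V#}"
  obtains T1 T2 where "T = T1 @ V # T2" "mset T1 + mset T2 = M"
proof -
  have "V \<in># mset T" using assms by simp
  then have "V \<in> set T" by simp
  then obtain T1 T2 where T: "T = T1 @ V # T2" by (meson split_list)
  have "mset T1 + mset T2 + {#V#} = M + {#V#}" using assms T by (simp add: algebra_simps)
  then have "mset T1 + mset T2 = M" by (rule add_right_imp_eq)
  then show ?thesis using T that by blast
qed

lemma F3:
  assumes cd: "c \<noteq> d" and ch: "chn x T" and n: "n \<ge> 1"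
    and m: "mset T = replicate_mset n (L0, a, a) + {#(L, c, d)#}"
  shows "a = c \<or> a = d"
proof -
  obtain T1 T2 where T: "T = T1 @ (L, c, d) # T2" and mm: "mset T1 + mset T2 = replicate_mset n (L0, a, a)"
    using m by (rule mset_split_single)
  have s: "set T1 \<subseteq> {(L0, a, a)}" "set T2 \<subseteq> {(L0, a, a)}"
    using mset_sub2[of T1 T2 n "(L0, a, a)" 0 "(L0, a, a)"] mm by auto
  have c1: "chn x T1" and e1: "endv x T1 = c" and c2: "chn d T2"
    using ch unfolding T chn_append by auto
  have "length T1 + length T2 = n" using arg_cong[OF mm, of size] by simp
  then consider "T2 \<noteq> []" | "T1 \<noteq> []" using n by fastforce
  then show ?thesis
  proof cases
    case 1
    then obtain e T2' where "T2 = e # T2'" by (cases T2) auto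
    then show ?thesis using c2 s(2) by auto
  next
    case 2
    then have "en (last T1) = c" using e1 endv_last by metis
    moreover have "last T1 \<in> set T1" using 2 by simp
    ultimately show ?thesis using s(1) by auto
  qed
qed

lemma len_filter_mset: "length (filter P T) = size (filter_mset P (mset T))"
  by (metis mset_filter size_mset)

lemma F4_in:
  assumes ch: "chn x T"
    and m: "mset T = replicate_mset n (L0, a, a) + {#V1#} + {#V2#}"
    and z: "en V1 = z" "en V2 = z" "st V1 \<noteq> z" "st V2 \<noteq> z" "a \<noteq> z"
  shows False
proof -
  have "length (filter (\<lambda>e. en e = z) T) = 2" unfolding len_filter_mset m using z by simp
  moreover have "length (filter (\<lambda>e. st e = z) T) = 0" unfolding len_filter_mset m using z by simp
  ultimately show False using telescope[OF ch, of z] by (simp split: if_splits)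
qed

lemma F4_out:
  assumes ch: "chn x T"
    and m: "mset T = replicate_mset n (L0, a, a) + {#V1#} + {#V2#}"
    and z: "st V1 = z" "st V2 = z" "en V1 \<noteq> z" "en V2 \<noteq> z" "a \<noteq> z"
  shows False
proof -
  have "length (filter (\<lambda>e. en e = z) T) = 0" unfolding len_filter_mset m using z by simp
  moreover have "length (filter (\<lambda>e. st e = z) T) = 2" unfolding len_filter_mset m using z by simp
  ultimately show False using telescope[OF ch, of z] by (simp split: if_splits)
qed

lemma F5:
  assumes d: "a \<noteq> b" "b \<noteq> c" "a \<noteq> c" and ch: "chn x T"
    and m: "mset T = replicate_mset n (L0, a, a) + {#(L1, a, b)#} + {#(L2, b, c)#}"
  shows "T = replicate n (L0, a, a) @ [(L1, a, b), (L2, b, c)] \<and> x = a \<and> endv x T = c"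
proof -
  obtain T1 T2 where T: "T = T1 @ (L2, b, c) # T2"
    and mm: "mset T1 + mset T2 = replicate_mset n (L0, a, a) + {#(L1, a, b)#}"
    using m by (rule mset_split_single)
  have c1: "chn x T1" and e1: "endv x T1 = b" and c2: "chn c T2"
    using ch unfolding T chn_append by auto
  have s2: "set T2 \<subseteq> {(L0, a, a), (L1, a, b)}"
  proof -
    have "set T2 \<subseteq> set_mset (mset T1 + mset T2)" by simp
    also have "\<dots> \<subseteq> {(L0, a, a), (L1, a, b)}" unfolding mm by (auto simp: in_replicate_mset)
    finally show ?thesis .
  qed
  have T2: "T2 = []"
  proof (rule ccontr)
    assume "T2 \<noteq> []"
    then obtain e T2' where "T2 = e # T2'" by (cases T2) auto
    then show False using c2 s2 d by auto
  qed
  have "mset T1 = replicate_mset n (L0, a, a) + {#(L1, a, b)#} + replicate_mset 0 (L0, b, b)"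
    using mm T2 by simp
  from F2[OF d(1) c1 this] have "T1 = replicate n (L0, a, a) @ [(L1, a, b)]" "x = a" by auto
  moreover have "endv x T = c" unfolding T endv_append e1 T2 by simp
  ultimately show ?thesis using T T2 by simp
qed



definition Sf :: "(bool \<Rightarrow> nat \<Rightarrow> nat \<Rightarrow> nat) \<Rightarrow> trp \<Rightarrow> nat" where
  "Sf s = (\<lambda>(b, i, j). s b i j)"

definition Dk :: "nat \<Rightarrow> trp set" where
  "Dk k = (UNIV :: bool set) \<times> {..<k} \<times> {..<k}"

lemma Sf_apply[simp]: "Sf s (b, i, j) = s b i j" by (simp add: Sf_def)
lemma Dk_iff[simp]: "(b, i, j) \<in> Dk k \<longleftrightarrow> i < k \<and> j < k" by (simp add: Dk_def)

lemma trip_chn: "length w = length vs \<Longrightarrow> chn r (trip w r vs) \<and> endv r (trip w r vs) = last (r # vs)"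
proof (induction w arbitrary: r vs)
  case Nil then show ?case by (simp add: trip_def)
next
  case (Cons b w) then show ?case by (cases vs) (auto simp: trip_Cons)
qed

lemma trip_fst: "length w = length vs \<Longrightarrow> map fst (trip w r vs) = w"
  by (simp add: trip_def)

lemma trip_en: "length w = length vs \<Longrightarrow> map en (trip w r vs) = vs"
proof (induction w arbitrary: r vs)
  case Nil then show ?case by (simp add: trip_def)
next
  case (Cons b w) then show ?case by (cases vs) (auto simp: trip_Cons)
qed

lemma trip_Dk: "r < k \<Longrightarrow> set vs \<subseteq> {..<k} \<Longrightarrow> set (trip w r vs) \<subseteq> Dk k"
proof (induction w arbitrary: r vs)
  case Nil then show ?case by (simp add: trip_def)
next
  case (Cons b w) then show ?case by (cases vs) (auto simp: trip_Cons trip_def)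
qed

lemma trip_of_chn: "chn r T \<Longrightarrow> trip (map fst T) r (map en T) = T"
proof (induction T arbitrary: r)
  case Nil then show ?case by (simp add: trip_def)
next
  case (Cons e T) then show ?case by (cases e) (auto simp: trip_Cons)
qed

lemma last_chn: "last (r # map en T) = endv r T"
proof (induction T arbitrary: r)
  case Nil then show ?case by simp
next
  case (Cons e T) then show ?case by simp
qed

lemma wmon_Sf: "wmon s w r vs = mon_of (image_mset (Sf s) (mset (trip w r vs)))"
  by (simp add: wmon_def Sf_def)

lemma image_mset_inj_eq:
  assumes "inj_on f D" "set_mset A \<subseteq> D" "set_mset B \<subseteq> D" "image_mset f A = image_mset f B"
  shows "A = B"
proof -
  have "image_mset f A = image_mset f B + {#}" using assms(4) by simp
  moreover have "inj_on f (set_mset A \<union> set_mset B)" using assms(1-3) by (meson inj_on_subset le_sup_iff)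
  ultimately obtain C where "A = B + C" "{#} = image_mset f C"
    using image_mset_eq_image_mset_plusD by blast
  then show ?thesis by simp
qed

lemma bridge:
  assumes inj: "inj_on (Sf s) (Dk k)" and r: "r < k" and vs: "vs \<in> walks k (length w) r r'"
    and N: "set_mset N \<subseteq> Dk k" and eq: "wmon s w r vs = mon_of (image_mset (Sf s) N)"
  shows "mset (trip w r vs) = N"
proof -
  have "set (trip w r vs) \<subseteq> Dk k" using vs r by (intro trip_Dk) (auto simp: walks_def)
  then show ?thesis
    using image_mset_inj_eq[OF inj _ N] eq mon_of_inj unfolding wmon_Sf by simp
qed

lemma R_zero:
  assumes inj: "inj_on (Sf s) (Dk k)" and r: "r < k" and N: "set_mset N \<subseteq> Dk k"
    and no: "\<And>T. chn r T \<Longrightarrow> endv r T = r' \<Longrightarrow> mset T = N \<Longrightarrow> False"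
  shows "Poly_Mapping.lookup (ncE k p s r r') (mon_of (image_mset (Sf s) N)) = 0"
proof (rule coeff_zero)
  fix w :: "bool list" and vs assume vs: "vs \<in> walks k (length w) r r'"
  show "wmon s w r vs \<noteq> mon_of (image_mset (Sf s) N)"
  proof
    assume eq: "wmon s w r vs = mon_of (image_mset (Sf s) N)"
    have l: "length w = length vs" using vs by (simp add: walks_def)
    have "mset (trip w r vs) = N" by (rule bridge[OF inj r vs N eq])
    moreover have "chn r (trip w r vs)" "endv r (trip w r vs) = r'"
      using trip_chn[OF l, of r] vs by (auto simp: walks_def)
    ultimately show False using no by blast
  qed
qed

lemma R_uniq:
  assumes inj: "inj_on (Sf s) (Dk k)" and r: "r < k" and N: "set_mset N \<subseteq> Dk k"
    and un: "\<And>T. chn r T \<Longrightarrow> endv r T = r' \<Longrightarrow> mset T = N \<Longrightarrow> T = T0"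
    and T0: "chn r T0" "endv r T0 = r'" "mset T0 = N"
  shows "Poly_Mapping.lookup (ncE k p s r r') (mon_of (image_mset (Sf s) N)) = Poly_Mapping.lookup p (map fst T0)"
proof (rule coeff_uniq)
  fix w :: "bool list" and vs assume vs: "vs \<in> walks k (length w) r r'" and eq: "wmon s w r vs = mon_of (image_mset (Sf s) N)"
  have l: "length w = length vs" using vs by (simp add: walks_def)
  have "mset (trip w r vs) = N" by (rule bridge[OF inj r vs N eq])
  moreover have "chn r (trip w r vs)" "endv r (trip w r vs) = r'"
    using trip_chn[OF l, of r] vs by (auto simp: walks_def)
  ultimately have "trip w r vs = T0" using un by blast
  then show "w = map fst T0 \<and> vs = map en T0" using trip_fst[OF l] trip_en[OF l] by auto
next
  have "set T0 \<subseteq> Dk k" using N T0(3) by (metis set_mset_mset)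
  then have "set (map en T0) \<subseteq> {..<k}" by (auto simp: Dk_def)
  then show "map en T0 \<in> walks k (length (map fst T0)) r r'"
    using T0(2) last_chn[of r T0] by (simp add: walks_def)
next
  show "wmon s (map fst T0) r (map en T0) = mon_of (image_mset (Sf s) N)"
    unfolding wmon_Sf trip_of_chn[OF T0(1)] T0(3) ..
qed



lemma chn_rep: "chn x (replicate n (b, x, x)) \<and> endv x (replicate n (b, x, x)) = x"
  by (induction n) auto

lemma set_mset_sub_Dk:
  "set_mset (replicate_mset n e) \<subseteq> Dk k \<longleftrightarrow> n = 0 \<or> e \<in> Dk k"
  by (auto simp: in_replicate_mset)

lemma RL1:
  assumes inj: "inj_on (Sf s) (Dk k)" and r: "r < k" and cd: "c < k" "d < k" and t: "t \<ge> 2"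
  shows "Poly_Mapping.lookup (ncE k p s r r') (mon_of (image_mset (Sf s) (replicate_mset t (b, c, d))))
     = (if c = d \<and> r = c \<and> r' = c then Poly_Mapping.lookup p (replicate t b) else 0)"
proof -
  have N: "set_mset (replicate_mset t (b, c, d)) \<subseteq> Dk k" using cd by (auto simp: in_replicate_mset)
  show ?thesis
  proof (cases "c = d \<and> r = c \<and> r' = c")
    case True
    have "Poly_Mapping.lookup (ncE k p s r r') (mon_of (image_mset (Sf s) (replicate_mset t (b, c, d))))
        = Poly_Mapping.lookup p (map fst (replicate t (b, c, c)))"
    proof (rule R_uniq[OF inj r N])
      fix T assume "chn r T" "endv r T = r'" "mset T = replicate_mset t (b, c, d)"
      then show "T = replicate t (b, c, c)" using F1[of r T t "(b, c, d)"] t True by auto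
    next
      show "chn r (replicate t (b, c, c))" "endv r (replicate t (b, c, c)) = r'"
        using chn_rep[of c t b] True by auto
      show "mset (replicate t (b, c, c)) = replicate_mset t (b, c, d)" using True by simp
    qed
    then show ?thesis using True by simp
  next
    case False
    have "Poly_Mapping.lookup (ncE k p s r r') (mon_of (image_mset (Sf s) (replicate_mset t (b, c, d)))) = 0"
    proof (rule R_zero[OF inj r N])
      fix T assume "chn r T" "endv r T = r'" "mset T = replicate_mset t (b, c, d)"
      then show False using F1[of r T t "(b, c, d)"] t False by auto
    qed
    then show ?thesis unfolding if_not_P[OF False] .
  qed
qed

lemma RL2:
  assumes inj: "inj_on (Sf s) (Dk k)" and r: "r < k" and ab: "a < k" "b < k" "a \<noteq> b"
  shows "Poly_Mapping.lookup (ncE k p s r r')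
      (mon_of (image_mset (Sf s) (replicate_mset i (L0, a, a) + {#(L, a, b)#} + replicate_mset j (L0, b, b))))
     = (if r = a \<and> r' = b then Poly_Mapping.lookup p (replicate i L0 @ L # replicate j L0) else 0)"
proof -
  let ?N = "replicate_mset i (L0, a, a) + {#(L, a, b)#} + replicate_mset j (L0, b, b)"
  let ?T0 = "replicate i (L0, a, a) @ (L, a, b) # replicate j (L0, b, b)"
  have N: "set_mset ?N \<subseteq> Dk k" using ab by (auto simp: in_replicate_mset)
  show ?thesis
  proof (cases "r = a \<and> r' = b")
    case True
    have "Poly_Mapping.lookup (ncE k p s r r') (mon_of (image_mset (Sf s) ?N))
        = Poly_Mapping.lookup p (map fst ?T0)"
    proof (rule R_uniq[OF inj r N])
      fix T assume "chn r T" "endv r T = r'" "mset T = ?N"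
      then show "T = ?T0" using F2[of a b r T i L0 L j] ab by auto
    next
      show "chn r ?T0" "endv r ?T0 = r'"
        using chn_rep[of a i L0] chn_rep[of b j L0] True by (auto simp: chn_append endv_append)
      show "mset ?T0 = ?N" by simp
    qed
    then show ?thesis using True by simp
  next
    case False
    have "Poly_Mapping.lookup (ncE k p s r r') (mon_of (image_mset (Sf s) ?N)) = 0"
    proof (rule R_zero[OF inj r N])
      fix T assume "chn r T" "endv r T = r'" "mset T = ?N"
      then show False using F2[of a b r T i L0 L j] ab False by auto
    qed
    then show ?thesis unfolding if_not_P[OF False] .
  qed
qed

lemma RL3:
  assumes inj: "inj_on (Sf s) (Dk k)" and r: "r < k" and a: "a < k" and cd: "c < k" "d < k" "c \<noteq> d"
    and n: "n \<ge> 1"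
    and nz: "Poly_Mapping.lookup (ncE k p s r r') (mon_of (image_mset (Sf s) (replicate_mset n (L0, a, a) + {#(L, c, d)#}))) \<noteq> 0"
  shows "a = c \<or> a = d"
proof (rule ccontr)
  assume na: "\<not> (a = c \<or> a = d)"
  have N: "set_mset (replicate_mset n (L0, a, a) + {#(L, c, d)#}) \<subseteq> Dk k" using a cd by (auto simp: in_replicate_mset)
  have "Poly_Mapping.lookup (ncE k p s r r') (mon_of (image_mset (Sf s) (replicate_mset n (L0, a, a) + {#(L, c, d)#}))) = 0"
  proof (rule R_zero[OF inj r N])
    fix T assume "chn r T" "endv r T = r'" "mset T = replicate_mset n (L0, a, a) + {#(L, c, d)#}"
    then show False using F3[of c d r T n L0 a L] cd n na by auto
  qed
  then show False using nz by simp
qed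

lemma RL4_in:
  assumes inj: "inj_on (Sf s) (Dk k)" and r: "r < k" and a: "a < k" and V: "V1 \<in> Dk k" "V2 \<in> Dk k"
    and z: "en V1 = z" "en V2 = z" "st V1 \<noteq> z" "st V2 \<noteq> z" "a \<noteq> z"
  shows "Poly_Mapping.lookup (ncE k p s r r') (mon_of (image_mset (Sf s) (replicate_mset n (L0, a, a) + {#V1#} + {#V2#}))) = 0"
proof (rule R_zero[OF inj r])
  show "set_mset (replicate_mset n (L0, a, a) + {#V1#} + {#V2#}) \<subseteq> Dk k" using a V by (auto simp: in_replicate_mset)
next
  fix T assume "chn r T" "endv r T = r'" "mset T = replicate_mset n (L0, a, a) + {#V1#} + {#V2#}"
  then show False using F4_in[of r T n L0 a V1 V2 z] z by auto
qed

lemma RL4_out: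
  assumes inj: "inj_on (Sf s) (Dk k)" and r: "r < k" and a: "a < k" and V: "V1 \<in> Dk k" "V2 \<in> Dk k"
    and z: "st V1 = z" "st V2 = z" "en V1 \<noteq> z" "en V2 \<noteq> z" "a \<noteq> z"
  shows "Poly_Mapping.lookup (ncE k p s r r') (mon_of (image_mset (Sf s) (replicate_mset n (L0, a, a) + {#V1#} + {#V2#}))) = 0"
proof (rule R_zero[OF inj r])
  show "set_mset (replicate_mset n (L0, a, a) + {#V1#} + {#V2#}) \<subseteq> Dk k" using a V by (auto simp: in_replicate_mset)
next
  fix T assume "chn r T" "endv r T = r'" "mset T = replicate_mset n (L0, a, a) + {#V1#} + {#V2#}"
  then show False using F4_out[of r T n L0 a V1 V2 z] z by auto
qed

lemma RL5:
  assumes inj: "inj_on (Sf s) (Dk k)" and abc: "a < k" "b < k" "c < k" "a \<noteq> b" "b \<noteq> c" "a \<noteq> c"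
  shows "Poly_Mapping.lookup (ncE k p s a c)
      (mon_of (image_mset (Sf s) (replicate_mset n (L0, a, a) + {#(L1, a, b)#} + {#(L2, b, c)#})))
     = Poly_Mapping.lookup p (replicate n L0 @ [L1, L2])"
proof -
  let ?N = "replicate_mset n (L0, a, a) + {#(L1, a, b)#} + {#(L2, b, c)#}"
  let ?T0 = "replicate n (L0, a, a) @ [(L1, a, b), (L2, b, c)]"
  have N: "set_mset ?N \<subseteq> Dk k" using abc by (auto simp: in_replicate_mset)
  have "Poly_Mapping.lookup (ncE k p s a c) (mon_of (image_mset (Sf s) ?N))
        = Poly_Mapping.lookup p (map fst ?T0)"
  proof (rule R_uniq[OF inj abc(1) N])
    fix T assume "chn a T" "endv a T = c" "mset T = ?N"
    then show "T = ?T0" using F5[of a b c a T n L0 L1 L2] abc by auto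
  next
    show "chn a ?T0" "endv a ?T0 = c"
      using chn_rep[of a n L0] by (auto simp: chn_append endv_append)
    show "mset ?T0 = ?N" by simp
  qed
  then show ?thesis by simp
qed



lemma conn:
  assumes sym: "\<And>a b. a < k \<Longrightarrow> b < k \<Longrightarrow> a \<noteq> b \<Longrightarrow> F a b = F b a"
    and ch: "\<And>a b c. a < k \<Longrightarrow> b < k \<Longrightarrow> c < k \<Longrightarrow> a \<noteq> b \<Longrightarrow> b \<noteq> c \<Longrightarrow> a \<noteq> c \<Longrightarrow> F a b = F b c"
    and h: "a < k" "b < k" "c < k" "d < k" "a \<noteq> b" "c \<noteq> d"
  shows "F a b = F c d"
proof (cases "b = c")
  case True
  show ?thesis
  proof (cases "a = d")
    case True then show ?thesis using sym h \<open>b = c\<close> by metis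
  next
    case False then show ?thesis using ch[of a b d] h \<open>b = c\<close> by metis
  qed
next
  case bc: False
  show ?thesis
  proof (cases "a = c")
    case ac: False
    have 1: "F a b = F b c" using ch[of a b c] h bc ac by metis
    show ?thesis
    proof (cases "b = d")
      case True then show ?thesis using 1 sym[of c b] h by metis
    next
      case False then show ?thesis using 1 ch[of b c d] h bc by metis
    qed
  next
    case ac: True
    show ?thesis
    proof (cases "b = d")
      case True then show ?thesis using ac by simp
    next
      case False then show ?thesis using sym[of a b] ch[of b a d] h ac by metis
    qed
  qed
qed

lemma conj_perm_eval:
  fixes Q :: "'a::comm_semiring_1 mat"
  assumes pe: "pe permutes {..<k}" and Q: "Q = (\<lambda>m i. if inv pe m = i then 1 else 0)"
    and ij: "i < k" "j < k"
  shows "conj_perm k Q A i j = A (pe i) (pe j)"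
proof -
  have iff: "inv pe m = i \<longleftrightarrow> m = pe i" for m i
    using pe by (metis permutes_inverses(1) permutes_inverses(2))
  have pk: "pe i < k" "pe j < k" using permutes_in_image[OF pe, of i] permutes_in_image[OF pe, of j] ij by auto
  have "conj_perm k Q A i j = (\<Sum>l<k. (\<Sum>m<k. (if m = pe i then 1 else 0) * A m l) * (if l = pe j then 1 else 0))"
    by (simp add: conj_perm_def mat_mult_def mat_transpose_def Q iff)
  also have "\<dots> = (\<Sum>l<k. (\<Sum>m<k. if m = pe i then A m l else 0) * (if l = pe j then 1 else 0))"
    by (intro sum.cong refl arg_cong2[where f="(*)"]) auto
  also have "\<dots> = (\<Sum>l<k. A (pe i) l * (if l = pe j then 1 else 0))"
    using pk by (simp only: sum.delta finite_lessThan lessThan_iff if_True)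
  also have "\<dots> = (\<Sum>l<k. if l = pe j then A (pe i) l else 0)"
    by (intro sum.cong refl) auto
  also have "\<dots> = A (pe i) (pe j)" using pk by (simp only: sum.delta finite_lessThan lessThan_iff if_True)
  finally show ?thesis .
qed

lemma is_perm_mat_Q:
  assumes pe: "pe permutes {..<k}"
  shows "is_perm_mat k (\<lambda>m i. if inv pe m = i then (1::'a::zero_neq_one) else 0)"
  unfolding is_perm_mat_def using permutes_inv[OF pe] by blast



lemma count_rep[simp]: "count_list (replicate m x) y = (if x = y then m else 0)"
  by (induction m) auto

lemma words0: "count_list w (\<not> g) = 0 \<Longrightarrow> w = replicate (count_list w g) g"
  by (induction w) auto

lemma words1: "{w. count_list w g = n \<and> count_list w (\<not> g) = 1} = (\<lambda>i. replicate i g @ (\<not> g) # replicate (n - i) g) ` {..n}"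
proof (intro set_eqI iffI)
  fix w assume "w \<in> {w. count_list w g = n \<and> count_list w (\<not> g) = 1}"
  then have h: "count_list w g = n" "count_list w (\<not> g) = 1" by auto
  have "(\<not> g) \<in> set w" using h(2) by (metis count_notin zero_neq_one)
  then obtain u v where w: "w = u @ (\<not> g) # v" "(\<not> g) \<notin> set u" by (meson split_list_first)
  have "count_list u (\<not> g) = 0" using w(2) by (simp add: count_notin)
  then have u: "u = replicate (count_list u g) g" by (rule words0)
  have "count_list v (\<not> g) = 0" using h(2) w(1) by simp
  then have v: "v = replicate (count_list v g) g" by (rule words0)
  have s: "count_list u g + count_list v g = n" using h(1) w(1) by simp
  have "w = replicate (count_list u g) g @ (\<not> g) # replicate (n - count_list u g) g"
    using u v w(1) s by (metis add_diff_cancel_left')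
  moreover have "count_list u g \<in> {..n}" using s by simp
  ultimately show "w \<in> (\<lambda>i. replicate i g @ (\<not> g) # replicate (n - i) g) ` {..n}" by blast
next
  fix w assume "w \<in> (\<lambda>i. replicate i g @ (\<not> g) # replicate (n - i) g) ` {..n}"
  then obtain i where "i \<le> n" "w = replicate i g @ (\<not> g) # replicate (n - i) g" by auto
  then show "w \<in> {w. count_list w g = n \<and> count_list w (\<not> g) = 1}"
    by (cases g) (auto simp: count_list_append)
qed

lemma words1_inj: "inj_on (\<lambda>i. replicate i g @ (\<not> g) # replicate (n - i) g) A"
proof (rule inj_onI)
  fix i j assume "replicate i g @ (\<not> g) # replicate (n - i) g = replicate j g @ (\<not> g) # replicate (n - j) g"
  then have "takeWhile (\<lambda>x. x = g) (replicate i g @ (\<not> g) # replicate (n - i) g) = takeWhile (\<lambda>x. x = g) (replicate j g @ (\<not> g) # replicate (n - j) g)"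
    by simp
  then show "i = j" by (simp add: takeWhile_append)
qed

lemma sum_keys_W:
  assumes "finite W" "{w \<in> Poly_Mapping.keys p. P w} = Poly_Mapping.keys p \<inter> W"
  shows "(\<Sum>w\<in>{w \<in> Poly_Mapping.keys p. P w}. Poly_Mapping.lookup p w) = (\<Sum>w\<in>W. Poly_Mapping.lookup p w)"
  unfolding assms(2)
  by (rule sum.mono_neutral_left) (auto simp: assms(1) in_keys_iff)

lemma phi_t0: "phi p t 0 = Poly_Mapping.lookup p (replicate t True)"
proof -
  have e: "{w \<in> Poly_Mapping.keys p. count_list w True = t \<and> count_list w False = 0 \<and> True} = Poly_Mapping.keys p \<inter> {replicate t True}"
  proof -
    have d: "count_list w False = 0 \<Longrightarrow> count_list w True = t \<Longrightarrow> w = replicate t True" for w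
    proof -
      assume a: "count_list w False = 0" and b: "count_list w True = t"
      have "count_list w (\<not> True) = 0" using a by simp
      then have "w = replicate (count_list w True) True" by (rule words0)
      then show ?thesis using b by metis
    qed
    show ?thesis
    proof (intro set_eqI iffI)
      fix w assume "w \<in> {w \<in> Poly_Mapping.keys p. count_list w True = t \<and> count_list w False = 0 \<and> True}"
      then have "w \<in> Poly_Mapping.keys p" "count_list w True = t" "count_list w False = 0" by auto
      then show "w \<in> Poly_Mapping.keys p \<inter> {replicate t True}" using d by blast
    next
      fix w assume "w \<in> Poly_Mapping.keys p \<inter> {replicate t True}"
      then show "w \<in> {w \<in> Poly_Mapping.keys p. count_list w True = t \<and> count_list w False = 0 \<and> True}" by auto
    qed
  qed
  have "phi p t 0 = (\<Sum>w\<in>{w \<in> Poly_Mapping.keys p. count_list w True = t \<and> count_list w False = 0 \<and> True}. Poly_Mapping.lookup p w)"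
    unfolding phi_def phiQ_def by (rule refl)
  also have "\<dots> = (\<Sum>w\<in>{replicate t True}. Poly_Mapping.lookup p w)" by (rule sum_keys_W[OF _ e]) simp
  finally show ?thesis by simp
qed

lemma phi_0t: "phi p 0 t = Poly_Mapping.lookup p (replicate t False)"
proof -
  have e: "{w \<in> Poly_Mapping.keys p. count_list w True = 0 \<and> count_list w False = t \<and> True} = Poly_Mapping.keys p \<inter> {replicate t False}"
  proof -
    have d: "count_list w True = 0 \<Longrightarrow> count_list w False = t \<Longrightarrow> w = replicate t False" for w
    proof -
      assume a: "count_list w True = 0" and b: "count_list w False = t"
      have "count_list w (\<not> False) = 0" using a by simp
      then have "w = replicate (count_list w False) False" by (rule words0)
      then show ?thesis using b by metis
    qed
    show ?thesis
    proof (intro set_eqI iffI)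
      fix w assume "w \<in> {w \<in> Poly_Mapping.keys p. count_list w True = 0 \<and> count_list w False = t \<and> True}"
      then have "w \<in> Poly_Mapping.keys p" "count_list w False = t" "count_list w True = 0" by auto
      then show "w \<in> Poly_Mapping.keys p \<inter> {replicate t False}" using d by blast
    next
      fix w assume "w \<in> Poly_Mapping.keys p \<inter> {replicate t False}"
      then show "w \<in> {w \<in> Poly_Mapping.keys p. count_list w True = 0 \<and> count_list w False = t \<and> True}" by auto
    qed
  qed
  have "phi p 0 t = (\<Sum>w\<in>{w \<in> Poly_Mapping.keys p. count_list w True = 0 \<and> count_list w False = t \<and> True}. Poly_Mapping.lookup p w)"
    unfolding phi_def phiQ_def by (rule refl)
  also have "\<dots> = (\<Sum>w\<in>{replicate t False}. Poly_Mapping.lookup p w)" by (rule sum_keys_W[OF _ e]) simp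
  finally show ?thesis by simp
qed

lemma phi_1g:
  "phiQ p Q (if g then n else 1) (if g then 1 else n) =
   (\<Sum>i\<in>{..n}. if Q (replicate i g @ (\<not> g) # replicate (n - i) g) then Poly_Mapping.lookup p (replicate i g @ (\<not> g) # replicate (n - i) g) else 0)"
proof -
  let ?f = "\<lambda>i. replicate i g @ (\<not> g) # replicate (n - i) g"
  have e: "{w \<in> Poly_Mapping.keys p. count_list w True = (if g then n else 1) \<and> count_list w False = (if g then 1 else n) \<and> Q w}
      = Poly_Mapping.keys p \<inter> {w \<in> ?f ` {..n}. Q w}"
    using words1[of g n] by (cases g) auto
  have "phiQ p Q (if g then n else 1) (if g then 1 else n) = (\<Sum>w\<in>{w \<in> ?f ` {..n}. Q w}. Poly_Mapping.lookup p w)"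
    unfolding phiQ_def by (rule sum_keys_W[OF _ e]) simp
  also have "\<dots> = (\<Sum>w\<in>?f ` {..n}. if Q w then Poly_Mapping.lookup p w else 0)"
    by (rule sum.inter_filter) simp
  also have "\<dots> = (\<Sum>i\<in>{..n}. if Q (?f i) then Poly_Mapping.lookup p (?f i) else 0)"
    by (subst sum.reindex[OF words1_inj]) simp
  finally show ?thesis .
qed

lemma not_W:
  assumes t: "t \<ge> 2"
    and HX: "\<And>i. i < t \<Longrightarrow> Poly_Mapping.lookup p (replicate i True @ False # replicate (t - 1 - i) True) = Poly_Mapping.lookup p (replicate t True)"
    and HY: "\<And>i. i < t \<Longrightarrow> Poly_Mapping.lookup p (replicate i False @ True # replicate (t - 1 - i) False) = Poly_Mapping.lookup p (replicate t False)"
  shows "\<not> (real t * phi p t 0 \<noteq> phi p (t - 1) 1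
         \<or> real t * phi p 0 t \<noteq> phi p 1 (t - 1)
         \<or> (phi_end p False (t - 1) 1 \<noteq> 0 \<and> phi p t 0 \<noteq> phi_end p False (t - 1) 1)
         \<or> (phi_begin p False (t - 1) 1 \<noteq> 0 \<and> phi p t 0 \<noteq> phi_begin p False (t - 1) 1)
         \<or> (phi_end p True 1 (t - 1) \<noteq> 0 \<and> phi p 0 t \<noteq> phi_end p True 1 (t - 1))
         \<or> (phi_begin p True 1 (t - 1) \<noteq> 0 \<and> phi p 0 t \<noteq> phi_begin p True 1 (t - 1)))"
proof -
  define n where "n = t - 1"
  have nt: "Suc n = t" "{..n} = {..<t}" using t by (auto simp: n_def)
  have HX': "\<And>i. i \<in> {..n} \<Longrightarrow> Poly_Mapping.lookup p (replicate i True @ (\<not> True) # replicate (n - i) True) = phi p t 0"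
    using HX nt by (simp add: phi_t0 n_def)
  have HY': "\<And>i. i \<in> {..n} \<Longrightarrow> Poly_Mapping.lookup p (replicate i False @ (\<not> False) # replicate (n - i) False) = phi p 0 t"
    using HY nt by (simp add: phi_0t n_def)
  have a1: "phi p n 1 = real t * phi p t 0"
    using phi_1g[of p "\<lambda>_. True" True n] HX' nt by (simp add: phi_def)
  have a2: "phi p 1 n = real t * phi p 0 t"
    using phi_1g[of p "\<lambda>_. True" False n] HY' nt by (simp add: phi_def)
  have a3: "phi_end p False n 1 = phi p t 0"
  proof -
    have "phi_end p False n 1 = (\<Sum>i\<in>{..n}. if (\<lambda>w. w \<noteq> [] \<and> last w = False) (replicate i True @ (\<not> True) # replicate (n - i) True) then Poly_Mapping.lookup p (replicate i True @ (\<not> True) # replicate (n - i) True) else 0)"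
      unfolding phi_end_def using phi_1g[of p "\<lambda>w. w \<noteq> [] \<and> last w = False" True n] by (simp only: if_True if_False not_True_eq_False not_False_eq_True)
    also have "\<dots> = (\<Sum>i\<in>{..n}. if i = n then phi p t 0 else 0)"
      by (rule sum.cong[OF refl]) (auto simp: HX'[simplified] HX'[of n, simplified] HX'[of 0, simplified] hd_append)
    finally show ?thesis by simp
  qed
  have a4: "phi_begin p False n 1 = phi p t 0"
  proof -
    have "phi_begin p False n 1 = (\<Sum>i\<in>{..n}. if (\<lambda>w. w \<noteq> [] \<and> hd w = False) (replicate i True @ (\<not> True) # replicate (n - i) True) then Poly_Mapping.lookup p (replicate i True @ (\<not> True) # replicate (n - i) True) else 0)"
      unfolding phi_begin_def using phi_1g[of p "\<lambda>w. w \<noteq> [] \<and> hd w = False" True n] by (simp only: if_True if_False not_True_eq_False not_False_eq_True)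
    also have "\<dots> = (\<Sum>i\<in>{..n}. if i = 0 then phi p t 0 else 0)"
      by (rule sum.cong[OF refl]) (auto simp: HX'[simplified] HX'[of n, simplified] HX'[of 0, simplified] hd_append)
    finally show ?thesis by simp
  qed
  have a5: "phi_end p True 1 n = phi p 0 t"
  proof -
    have "phi_end p True 1 n = (\<Sum>i\<in>{..n}. if (\<lambda>w. w \<noteq> [] \<and> last w = True) (replicate i False @ (\<not> False) # replicate (n - i) False) then Poly_Mapping.lookup p (replicate i False @ (\<not> False) # replicate (n - i) False) else 0)"
      unfolding phi_end_def using phi_1g[of p "\<lambda>w. w \<noteq> [] \<and> last w = True" False n] by (simp only: if_True if_False not_True_eq_False not_False_eq_True)
    also have "\<dots> = (\<Sum>i\<in>{..n}. if i = n then phi p 0 t else 0)"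
      by (rule sum.cong[OF refl]) (auto simp: HY'[simplified] HY'[of n, simplified] HY'[of 0, simplified] hd_append)
    finally show ?thesis by simp
  qed
  have a6: "phi_begin p True 1 n = phi p 0 t"
  proof -
    have "phi_begin p True 1 n = (\<Sum>i\<in>{..n}. if (\<lambda>w. w \<noteq> [] \<and> hd w = True) (replicate i False @ (\<not> False) # replicate (n - i) False) then Poly_Mapping.lookup p (replicate i False @ (\<not> False) # replicate (n - i) False) else 0)"
      unfolding phi_begin_def using phi_1g[of p "\<lambda>w. w \<noteq> [] \<and> hd w = True" False n] by (simp only: if_True if_False not_True_eq_False not_False_eq_True)
    also have "\<dots> = (\<Sum>i\<in>{..n}. if i = 0 then phi p 0 t else 0)"
      by (rule sum.cong[OF refl]) (auto simp: HY'[simplified] HY'[of n, simplified] HY'[of 0, simplified] hd_append)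
    finally show ?thesis by simp
  qed
  have tn: "t - 1 = n" by (simp add: n_def)
  show ?thesis unfolding tn using a1 a2 a3 a4 a5 a6 by simp
qed



lemma rep_mid: "replicate i x @ x # replicate j x = replicate (Suc (i + j)) x"
  by (simp add: replicate_add[symmetric] replicate_append_same[symmetric])

lemma core:
  fixes k t :: nat and s s' :: "bool \<Rightarrow> nat \<Rightarrow> nat \<Rightarrow> nat" and p p' :: ncpoly
    and \<sigma>1 \<sigma>2 :: "nat \<Rightarrow> nat \<Rightarrow> nat"
  assumes inj: "inj_on (Sf s) (Dk k)" and inj': "inj_on (Sf s') (Dk k)"
    and img: "Sf s ` Dk k = Sf s' ` Dk k"
    and sk: "\<And>i j. i < k \<Longrightarrow> j < k \<Longrightarrow> \<sigma>1 i j < k \<and> \<sigma>2 i j < k"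
    and sinj: "\<And>i j i' j'. i < k \<Longrightarrow> j < k \<Longrightarrow> i' < k \<Longrightarrow> j' < k \<Longrightarrow> \<sigma>1 i j = \<sigma>1 i' j' \<Longrightarrow> \<sigma>2 i j = \<sigma>2 i' j' \<Longrightarrow> i = i' \<and> j = j'"
    and TR: "\<And>i j. i < k \<Longrightarrow> j < k \<Longrightarrow> ncE k p s i j = ncE k p' s' (\<sigma>1 i j) (\<sigma>2 i j)"
    and t: "t \<ge> 2"
    and an: "\<And>l. Poly_Mapping.lookup p (replicate t l) \<noteq> 0"
    and ab: "Poly_Mapping.lookup p (replicate t True) \<noteq> Poly_Mapping.lookup p (replicate t False)"
    and HW: "\<not> ((\<forall>i<t. \<forall>l. Poly_Mapping.lookup p (replicate i l @ (\<not> l) # replicate (t - 1 - i) l) = Poly_Mapping.lookup p (replicate t l)))"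
  shows "\<exists>g f \<pi>. (\<forall>i<k. \<pi> i < k) \<and> inj_on \<pi> {..<k} \<and>
     (\<forall>i<k. \<forall>j<k. s True i j = s' g (if f then \<pi> j else \<pi> i) (if f then \<pi> i else \<pi> j)
                 \<and> s False i j = s' (\<not> g) (if f then \<pi> j else \<pi> i) (if f then \<pi> i else \<pi> j))"
proof -
  define al where "al l = Poly_Mapping.lookup p (replicate t l)" for l
  have surj: "\<exists>b' c d. c < k \<and> d < k \<and> s b a b0 = s' b' c d" if "a < k" "b0 < k" for b a b0
  proof -
    have "Sf s (b, a, b0) \<in> Sf s' ` Dk k" using img that by (metis Dk_iff imageI)
    then obtain e where "e \<in> Dk k" "Sf s (b, a, b0) = Sf s' e" by blast
    then show ?thesis by (cases e) auto
  qed
  have sinjs: "\<And>l a b l' a' b'. a < k \<Longrightarrow> b < k \<Longrightarrow> a' < k \<Longrightarrow> b' < k \<Longrightarrow> s l a b = s l' a' b' \<Longrightarrow> l = l' \<and> a = a' \<and> b = b'"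
    using inj unfolding inj_on_def by (metis Dk_iff Sf_apply prod.inject)
  have sinjs': "\<And>l a b l' a' b'. a < k \<Longrightarrow> b < k \<Longrightarrow> a' < k \<Longrightarrow> b' < k \<Longrightarrow> s' l a b = s' l' a' b' \<Longrightarrow> l = l' \<and> a = a' \<and> b = b'"
    using inj' unfolding inj_on_def by (metis Dk_iff Sf_apply prod.inject)
  have TRm: "Poly_Mapping.lookup (ncE k p s i j) m = Poly_Mapping.lookup (ncE k p' s' (\<sigma>1 i j) (\<sigma>2 i j)) m"
    if "i < k" "j < k" for i j m using TR[OF that] by simp
  have S1: "\<exists>b'. s l a a = s' b' (\<sigma>1 a a) (\<sigma>1 a a) \<and> \<sigma>2 a a = \<sigma>1 a a \<and> Poly_Mapping.lookup p' (replicate t b') = al l"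
    if a: "a < k" for l a
  proof -
    obtain b' c d where cd: "c < k" "d < k" "s l a a = s' b' c d" using surj a by blast
    have "Poly_Mapping.lookup (ncE k p s a a) (mon_of (image_mset (Sf s) (replicate_mset t (l, a, a)))) = al l"
      using RL1[OF inj a a a t, of p a l] by (simp add: al_def)
    moreover have "image_mset (Sf s) (replicate_mset t (l, a, a)) = image_mset (Sf s') (replicate_mset t (b', c, d))"
      using cd by simp
    ultimately have "Poly_Mapping.lookup (ncE k p' s' (\<sigma>1 a a) (\<sigma>2 a a)) (mon_of (image_mset (Sf s') (replicate_mset t (b', c, d)))) = al l"
      using TRm[OF a a] by simp
    moreover have "\<sigma>1 a a < k" using sk a by blast
    ultimately have "(if c = d \<and> \<sigma>1 a a = c \<and> \<sigma>2 a a = c then Poly_Mapping.lookup p' (replicate t b') else 0) = al l"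
      using RL1[OF inj' _ cd(1,2) t, of "\<sigma>1 a a" p' "\<sigma>2 a a" b'] by simp
    moreover have "al l \<noteq> 0" using an by (simp add: al_def)
    ultimately show ?thesis using cd by (auto split: if_splits)
  qed
  define \<pi> where "\<pi> a = \<sigma>1 a a" for a
  define G where "G a = (SOME b'. s True a a = s' b' (\<pi> a) (\<pi> a) \<and> Poly_Mapping.lookup p' (replicate t b') = al True)" for a
  have G: "s True a a = s' (G a) (\<pi> a) (\<pi> a) \<and> Poly_Mapping.lookup p' (replicate t (G a)) = al True" if "a < k" for a
  proof -
    have "\<exists>b'. s True a a = s' b' (\<pi> a) (\<pi> a) \<and> Poly_Mapping.lookup p' (replicate t b') = al True"
      using S1[OF that, of True] unfolding \<pi>_def by blast
    then show ?thesis unfolding G_def by (rule someI_ex)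
  qed
  have GF: "s False a a = s' (\<not> G a) (\<pi> a) (\<pi> a) \<and> Poly_Mapping.lookup p' (replicate t (\<not> G a)) = al False" if a: "a < k" for a
  proof -
    obtain b'' where b: "s False a a = s' b'' (\<pi> a) (\<pi> a)" "Poly_Mapping.lookup p' (replicate t b'') = al False"
      using S1[OF a, of False] unfolding \<pi>_def by blast
    have "b'' \<noteq> G a"
    proof
      assume "b'' = G a"
      then have "s False a a = s True a a" using b G[OF a] by simp
      then show False using sinjs[OF a a a a] by blast
    qed
    then have "b'' = (\<not> G a)" by blast
    then show ?thesis using b by simp
  qed
  show ?thesis
  proof (cases "k = 0")
    case True then show ?thesis by auto
  next
    case False
    then have k0: "0 < k" by simp
    define g where "g = G 0"
    have Gc: "G a = g" if a: "a < k" for a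
    proof (rule ccontr)
      assume "G a \<noteq> g"
      then have "G a = (\<not> G 0)" by (simp add: g_def)
      then have "al True = al False" using G[OF a] GF[OF k0] by simp
      then show False using ab by (simp add: al_def)
    qed
    have D: "s l a a = s' (l = g) (\<pi> a) (\<pi> a)" if a: "a < k" for l a
      using G[OF a] GF[OF a] Gc[OF a] by (cases l) auto
    have Dal: "Poly_Mapping.lookup p' (replicate t (l = g)) = al l" for l
      using G[OF k0] GF[OF k0] by (cases l) (auto simp: g_def)
    have \<pi>k: "\<pi> a < k" if "a < k" for a using sk[OF that that] by (simp add: \<pi>_def)
    have \<sigma>2d: "\<sigma>2 a a = \<pi> a" if "a < k" for a using S1[OF that, of True] unfolding \<pi>_def by blast
    have \<pi>inj: "inj_on \<pi> {..<k}"
    proof (rule inj_onI)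
      fix a b assume "a \<in> {..<k}" "b \<in> {..<k}" "\<pi> a = \<pi> b"
      then show "a = b" using sinj[of a a b b] \<sigma>2d by (auto simp: \<pi>_def)
    qed
    have \<pi>surj: "\<pi> ` {..<k} = {..<k}"
      by (rule endo_inj_surj) (use \<pi>k \<pi>inj in auto)
    have \<pi>ex: "\<exists>a<k. \<pi> a = c" if "c < k" for c using \<pi>surj that by (metis imageE lessThan_iff)
    have aln: "al l \<noteq> 0" for l using an by (simp add: al_def)
    have S2: "(\<exists>l'. s l a b = s' l' (\<sigma>1 a b) (\<sigma>2 a b)) \<and> ((\<sigma>1 a b = \<pi> a \<and> \<sigma>2 a b = \<pi> b) \<or> (\<sigma>1 a b = \<pi> b \<and> \<sigma>2 a b = \<pi> a))"
      if ab: "a < k" "b < k" "a \<noteq> b" for l a b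
    proof -
      obtain l' c d where cd: "c < k" "d < k" "s l a b = s' l' c d" using surj ab by blast
      have cnd: "c \<noteq> d"
      proof
        assume "c = d"
        obtain a' where a': "a' < k" "\<pi> a' = c" using \<pi>ex[OF cd(1)] by blast
        have lg: "((l' = g) = g) = l'" by blast
        have "s (l' = g) a' a' = s' l' c c" using D[OF a'(1), of "l' = g"] a'(2) unfolding lg by simp
        then have "s l a b = s (l' = g) a' a'" using cd \<open>c = d\<close> by simp
        then show False using sinjs[OF ab(1,2) a'(1) a'(1)] ab(3) by blast
      qed
      have \<sigma>k: "\<sigma>1 a b < k" "\<sigma>2 a b < k" using sk[OF ab(1,2)] by auto
      have tt: "Suc (t - 1 + 0) = t" "Suc (0 + (t - 1)) = t" using t by auto
      define Na where "Na = replicate_mset (t - 1) (l, a, a) + {#(l, a, b)#} + replicate_mset 0 (l, b, b)"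
      define Nb where "Nb = replicate_mset 0 (l, a, a) + {#(l, a, b)#} + replicate_mset (t - 1) (l, b, b)"
      have va: "Poly_Mapping.lookup (ncE k p s a b) (mon_of (image_mset (Sf s) Na)) = al l"
        using RL2[OF inj ab(1) ab(1) ab(2) ab(3), of p b "t - 1" l l 0] unfolding Na_def rep_mid tt by (simp add: al_def)
      have vb: "Poly_Mapping.lookup (ncE k p s a b) (mon_of (image_mset (Sf s) Nb)) = al l"
        using RL2[OF inj ab(1) ab(1) ab(2) ab(3), of p b 0 l l "t - 1"] unfolding Nb_def rep_mid tt by (simp add: al_def)
      have ia: "image_mset (Sf s) Na = image_mset (Sf s') (replicate_mset (t - 1) (l = g, \<pi> a, \<pi> a) + {#(l', c, d)#})"
        unfolding Na_def using D[OF ab(1)] cd by simp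
      have ib: "image_mset (Sf s) Nb = image_mset (Sf s') (replicate_mset (t - 1) (l = g, \<pi> b, \<pi> b) + {#(l', c, d)#})"
        unfolding Nb_def using D[OF ab(2)] cd by (simp add: add.commute)
      have va': "Poly_Mapping.lookup (ncE k p' s' (\<sigma>1 a b) (\<sigma>2 a b)) (mon_of (image_mset (Sf s') (replicate_mset (t - 1) (l = g, \<pi> a, \<pi> a) + {#(l', c, d)#}))) = al l"
        using va TRm[OF ab(1,2)] ia by simp
      have vb': "Poly_Mapping.lookup (ncE k p' s' (\<sigma>1 a b) (\<sigma>2 a b)) (mon_of (image_mset (Sf s') (replicate_mset (t - 1) (l = g, \<pi> b, \<pi> b) + {#(l', c, d)#}))) = al l"
        using vb TRm[OF ab(1,2)] ib by simp
      have t1: "t - 1 \<ge> 1" using t by simp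
      have pa: "\<pi> a = c \<or> \<pi> a = d"
        using RL3[OF inj' \<sigma>k(1) \<pi>k[OF ab(1)] cd(1,2) cnd t1] va' aln by metis
      have pb: "\<pi> b = c \<or> \<pi> b = d"
        using RL3[OF inj' \<sigma>k(1) \<pi>k[OF ab(2)] cd(1,2) cnd t1] vb' aln by metis
      have pab: "\<pi> a \<noteq> \<pi> b" using \<pi>inj ab unfolding inj_on_def by blast
      have "(c = \<pi> a \<and> d = \<pi> b) \<or> (c = \<pi> b \<and> d = \<pi> a)" using pa pb pab cnd by auto
      then have \<sigma>cd: "\<sigma>1 a b = c \<and> \<sigma>2 a b = d"
      proof
        assume h: "c = \<pi> a \<and> d = \<pi> b"
        have "replicate_mset (t - 1) (l = g, \<pi> a, \<pi> a) + {#(l', c, d)#} = replicate_mset (t - 1) (l = g, \<pi> a, \<pi> a) + {#(l', \<pi> a, \<pi> b)#} + replicate_mset 0 (l = g, \<pi> b, \<pi> b)"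
          using h by simp
        then have "(if \<sigma>1 a b = \<pi> a \<and> \<sigma>2 a b = \<pi> b then Poly_Mapping.lookup p' (replicate (t - 1) (l = g) @ l' # replicate 0 (l = g)) else 0) = al l"
          using va' RL2[OF inj' \<sigma>k(1) \<pi>k[OF ab(1)] \<pi>k[OF ab(2)] pab, of p' "\<sigma>2 a b" "t - 1" "l = g" l' 0] by simp
        then show ?thesis using aln h by (auto split: if_splits)
      next
        assume h: "c = \<pi> b \<and> d = \<pi> a"
        have "replicate_mset (t - 1) (l = g, \<pi> b, \<pi> b) + {#(l', c, d)#} = replicate_mset (t - 1) (l = g, \<pi> b, \<pi> b) + {#(l', \<pi> b, \<pi> a)#} + replicate_mset 0 (l = g, \<pi> a, \<pi> a)"
          using h by simp
        then have "(if \<sigma>1 a b = \<pi> b \<and> \<sigma>2 a b = \<pi> a then Poly_Mapping.lookup p' (replicate (t - 1) (l = g) @ l' # replicate 0 (l = g)) else 0) = al l"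
          using vb' RL2[OF inj' \<sigma>k(1) \<pi>k[OF ab(2)] \<pi>k[OF ab(1)] pab[symmetric], of p' "\<sigma>2 a b" "t - 1" "l = g" l' 0] by simp
        then show ?thesis using aln h by (auto split: if_splits)
      qed
      show ?thesis using \<sigma>cd \<open>(c = \<pi> a \<and> d = \<pi> b) \<or> (c = \<pi> b \<and> d = \<pi> a)\<close> cd(3) by auto
    qed
    have GEN3: "Poly_Mapping.lookup p (replicate i l @ (\<not> l) # replicate (t - 1 - i) l) = al l"
      if ab: "a < k" "b < k" "a \<noteq> b" and hyp: "s (\<not> l) a b = s' (l = g) (\<sigma>1 a b) (\<sigma>2 a b)" and i: "i < t" for a b l i
    proof -
      have \<sigma>k: "\<sigma>1 a b < k" "\<sigma>2 a b < k" using sk[OF ab(1,2)] by auto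
      have pab: "\<pi> a \<noteq> \<pi> b" using \<pi>inj ab unfolding inj_on_def by blast
      have ti: "Suc (i + (t - 1 - i)) = t" "Suc (t - 1 - i + i) = t" using i by auto
      define N where "N = replicate_mset i (l, a, a) + {#(\<not> l, a, b)#} + replicate_mset (t - 1 - i) (l, b, b)"
      have vp: "Poly_Mapping.lookup (ncE k p s a b) (mon_of (image_mset (Sf s) N)) = Poly_Mapping.lookup p (replicate i l @ (\<not> l) # replicate (t - 1 - i) l)"
        using RL2[OF inj ab(1) ab(1) ab(2) ab(3), of p b i l "\<not> l" "t - 1 - i"] unfolding N_def by simp
      have "Poly_Mapping.lookup (ncE k p' s' (\<sigma>1 a b) (\<sigma>2 a b)) (mon_of (image_mset (Sf s) N)) = al l"
        using conjunct2[OF S2[OF ab, of l]]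
      proof
        assume h: "\<sigma>1 a b = \<pi> a \<and> \<sigma>2 a b = \<pi> b"
        have "image_mset (Sf s) N = image_mset (Sf s') (replicate_mset i (l = g, \<pi> a, \<pi> a) + {#(l = g, \<pi> a, \<pi> b)#} + replicate_mset (t - 1 - i) (l = g, \<pi> b, \<pi> b))"
          unfolding N_def using D[OF ab(1)] D[OF ab(2)] hyp h by simp
        then show ?thesis
          using RL2[OF inj' \<sigma>k(1) \<pi>k[OF ab(1)] \<pi>k[OF ab(2)] pab, of p' "\<sigma>2 a b" i "l = g" "l = g" "t - 1 - i"] h
          unfolding rep_mid ti by (simp add: Dal)
      next
        assume h: "\<sigma>1 a b = \<pi> b \<and> \<sigma>2 a b = \<pi> a"
        have "image_mset (Sf s) N = image_mset (Sf s') (replicate_mset (t - 1 - i) (l = g, \<pi> b, \<pi> b) + {#(l = g, \<pi> b, \<pi> a)#} + replicate_mset i (l = g, \<pi> a, \<pi> a))"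
          unfolding N_def using D[OF ab(1)] D[OF ab(2)] hyp h by (simp add: add.commute add.left_commute)
        then show ?thesis
          using RL2[OF inj' \<sigma>k(1) \<pi>k[OF ab(2)] \<pi>k[OF ab(1)] pab[symmetric], of p' "\<sigma>2 a b" "t - 1 - i" "l = g" "l = g" i] h
          unfolding rep_mid ti by (simp add: Dal)
      qed
      then show ?thesis using vp TRm[OF ab(1,2)] by simp
    qed
    have S3: "s True a b = s' g (\<sigma>1 a b) (\<sigma>2 a b) \<and> s False a b = s' (\<not> g) (\<sigma>1 a b) (\<sigma>2 a b)"
      if ab: "a < k" "b < k" "a \<noteq> b" for a b
    proof -
      obtain l1 where l1: "s True a b = s' l1 (\<sigma>1 a b) (\<sigma>2 a b)" using S2[OF ab, of True] by blast
      obtain l2 where l2: "s False a b = s' l2 (\<sigma>1 a b) (\<sigma>2 a b)" using S2[OF ab, of False] by blast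
      have "l1 \<noteq> l2"
      proof
        assume "l1 = l2"
        then have "s True a b = s False a b" using l1 l2 by simp
        then show False using sinjs[OF ab(1,2) ab(1,2)] by blast
      qed
      have "l1 = g"
      proof (rule ccontr)
        assume "l1 \<noteq> g"
        then have e1: "l1 = (False = g)" and e2: "l2 = (True = g)" using \<open>l1 \<noteq> l2\<close> by auto
        have "\<forall>i<t. \<forall>l. Poly_Mapping.lookup p (replicate i l @ (\<not> l) # replicate (t - 1 - i) l) = Poly_Mapping.lookup p (replicate t l)"
        proof (intro allI impI)
          fix i l assume i: "i < t"
          show "Poly_Mapping.lookup p (replicate i l @ (\<not> l) # replicate (t - 1 - i) l) = Poly_Mapping.lookup p (replicate t l)"
          proof (cases l)
            case True
            then show ?thesis using GEN3[OF ab _ i, of True] l2 e2 by (simp add: al_def)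
          next
            case False
            then show ?thesis using GEN3[OF ab _ i, of False] l1 e1 by (simp add: al_def)
          qed
        qed
        then show False using HW by blast
      qed
      then show ?thesis using l1 l2 \<open>l1 \<noteq> l2\<close> by auto
    qed
    define fl where "fl a b = (\<sigma>1 a b = \<pi> b)" for a b
    have \<sigma>fl: "\<sigma>1 a b = (if fl a b then \<pi> b else \<pi> a) \<and> \<sigma>2 a b = (if fl a b then \<pi> a else \<pi> b)"
      if ab: "a < k" "b < k" "a \<noteq> b" for a b
    proof -
      have pab: "\<pi> a \<noteq> \<pi> b" using \<pi>inj ab unfolding inj_on_def by blast
      then show ?thesis using conjunct2[OF S2[OF ab, of True]] unfolding fl_def by auto
    qed
    have flsym: "fl a b = fl b a" if ab: "a < k" "b < k" "a \<noteq> b" for a b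
    proof (rule ccontr)
      assume ne: "fl a b \<noteq> fl b a"
      have "\<sigma>1 a b = \<sigma>1 b a \<and> \<sigma>2 a b = \<sigma>2 b a"
        using \<sigma>fl[OF ab] \<sigma>fl[of b a] ab ne by (cases "fl a b") auto
      then show False using sinj[of a b b a] ab by auto
    qed
    have flch: "fl a b = fl b c" if abc: "a < k" "b < k" "c < k" "a \<noteq> b" "b \<noteq> c" "a \<noteq> c" for a b c
    proof (rule ccontr)
      assume ne: "fl a b \<noteq> fl b c"
      have pd: "\<pi> a \<noteq> \<pi> b" "\<pi> b \<noteq> \<pi> c" "\<pi> a \<noteq> \<pi> c" using \<pi>inj abc unfolding inj_on_def by (meson lessThan_iff)+
      have \<sigma>k: "\<sigma>1 a c < k" using sk[OF abc(1,3)] by blast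
      define N where "N = replicate_mset (t - 2) (True, a, a) + {#(True, a, b)#} + {#(True, b, c)#}"
      have tt: "replicate (t - 2) True @ [True, True] = replicate t True"
      proof -
        define m where "m = t - 2"
        have m: "t = m + 2" using t by (simp add: m_def)
        show ?thesis unfolding m using replicate_add[of m 2 True] by (simp add: numeral_2_eq_2)
      qed
      have vp: "Poly_Mapping.lookup (ncE k p s a c) (mon_of (image_mset (Sf s) N)) = al True"
        using RL5[OF inj abc, of p "t - 2" True True True] unfolding N_def al_def tt by (simp only: tt)
      define V1 where "V1 = (g, \<sigma>1 a b, \<sigma>2 a b)"
      define V2 where "V2 = (g, \<sigma>1 b c, \<sigma>2 b c)"
      have im: "image_mset (Sf s) N = image_mset (Sf s') (replicate_mset (t - 2) (g, \<pi> a, \<pi> a) + {#V1#} + {#V2#})"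
        unfolding N_def V1_def V2_def using D[OF abc(1), of True] S3[OF abc(1,2,4)] S3[OF abc(2,3,5)] by simp
      have V: "V1 \<in> Dk k" "V2 \<in> Dk k" using sk[OF abc(1,2)] sk[OF abc(2,3)] by (auto simp: V1_def V2_def)
      have "Poly_Mapping.lookup (ncE k p' s' (\<sigma>1 a c) (\<sigma>2 a c)) (mon_of (image_mset (Sf s') (replicate_mset (t - 2) (g, \<pi> a, \<pi> a) + {#V1#} + {#V2#}))) = 0"
      proof (cases "fl a b")
        case True
        then have "\<not> fl b c" using ne by simp
        then show ?thesis
          using RL4_out[OF inj' \<sigma>k \<pi>k[OF abc(1)] V, of "\<pi> b" p' "\<sigma>2 a c" "t - 2" g] True
            \<sigma>fl[OF abc(1,2,4)] \<sigma>fl[OF abc(2,3,5)] pd by (simp add: V1_def V2_def)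
      next
        case False
        then have "fl b c" using ne by simp
        then show ?thesis
          using RL4_in[OF inj' \<sigma>k \<pi>k[OF abc(1)] V, of "\<pi> b" p' "\<sigma>2 a c" "t - 2" g] False
            \<sigma>fl[OF abc(1,2,4)] \<sigma>fl[OF abc(2,3,5)] pd by (simp add: V1_def V2_def)
      qed
      then show False using vp TRm[OF abc(1,3)] im aln by simp
    qed
    define f where "f = (if k \<ge> 2 then fl 0 1 else False)"
    have flf: "fl a b = f" if ab: "a < k" "b < k" "a \<noteq> b" for a b
    proof -
      have k2: "k \<ge> 2" using ab by (cases "a < b") auto
      have "fl a b = fl 0 1"
        by (rule conn[of k fl, OF flsym flch]) (use ab k2 in auto)
      then show ?thesis using k2 by (simp add: f_def)
    qed
    have fin: "s True i j = s' g (if f then \<pi> j else \<pi> i) (if f then \<pi> i else \<pi> j)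
                 \<and> s False i j = s' (\<not> g) (if f then \<pi> j else \<pi> i) (if f then \<pi> i else \<pi> j)"
      if ij: "i < k" "j < k" for i j
    proof (cases "i = j")
      case True
      then show ?thesis using D[OF ij(1), of True] D[OF ij(1), of False] by simp
    next
      case False
      then show ?thesis using S3[OF ij False] \<sigma>fl[OF ij False] flf[OF ij False] by simp
    qed
    show ?thesis using fin \<pi>k \<pi>inj by blast
  qed
qed


theorem theorem1p5:
  fixes k :: nat and P :: "nat \<Rightarrow> cpoly"
    and s s' :: "bool \<Rightarrow> nat \<Rightarrow> nat \<Rightarrow> nat" and p p' :: ncpoly
  assumes "k \<ge> 1"
    and "nc_rep k P s p" and "nc_rep k P s' p'"
    and "p \<in> classW" and "p' \<in> classW"
  shows "\<exists>Q :: cpoly mat. is_perm_mat k Q \<and>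
    (let X = var_mat s True; Y = var_mat s False;
         X' = var_mat s' True; Y' = var_mat s' False in
      (mat_eq k X (conj_perm k Q X') \<and> mat_eq k Y (conj_perm k Q Y'))
    \<or> (mat_eq k X (conj_perm k Q (mat_transpose X')) \<and> mat_eq k Y (conj_perm k Q (mat_transpose Y')))
    \<or> (mat_eq k X (conj_perm k Q Y') \<and> mat_eq k Y (conj_perm k Q X'))
    \<or> (mat_eq k X (conj_perm k Q (mat_transpose Y')) \<and> mat_eq k Y (conj_perm k Q (mat_transpose X'))))"
proof -
  have SD: "(\<lambda>(b, i, j). s b i j) = Sf s" "(\<lambda>(b, i, j). s' b i j) = Sf s'" "(UNIV :: bool set) \<times> {..<k} \<times> {..<k} = Dk k"
    by (auto simp: Sf_def Dk_def)
  obtain \<tau> where bs: "bij_betw (Sf s) (Dk k) {..<2 * k^2}" and \<tau>: "bij_betw \<tau> ({..<k} \<times> {..<k}) {..<k^2}"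
    and E: "\<And>i j. i < k \<Longrightarrow> j < k \<Longrightarrow> ncE k p s i j = P (\<tau> (i, j))"
    using assms(2) unfolding nc_rep_def SD by blast
  obtain \<tau>' where bs': "bij_betw (Sf s') (Dk k) {..<2 * k^2}" and \<tau>': "bij_betw \<tau>' ({..<k} \<times> {..<k}) {..<k^2}"
    and E': "\<And>i j. i < k \<Longrightarrow> j < k \<Longrightarrow> ncE k p' s' i j = P (\<tau>' (i, j))"
    using assms(3) unfolding nc_rep_def SD by blast
  define sg where "sg ij = inv_into ({..<k} \<times> {..<k}) \<tau>' (\<tau> ij)" for ij
  define \<sigma>1 where "\<sigma>1 i j = fst (sg (i, j))" for i j
  define \<sigma>2 where "\<sigma>2 i j = snd (sg (i, j))" for i j
  have sgD: "sg (i, j) \<in> {..<k} \<times> {..<k} \<and> \<tau>' (sg (i, j)) = \<tau> (i, j)" if "i < k" "j < k" for i j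
  proof -
    have "\<tau> (i, j) \<in> {..<k^2}" using \<tau> that by (auto simp: bij_betw_def)
    then show ?thesis unfolding sg_def using \<tau>'
      by (metis bij_betw_def bij_betw_inv_into_right inv_into_into)
  qed
  have sk: "\<sigma>1 i j < k \<and> \<sigma>2 i j < k" if "i < k" "j < k" for i j
    using sgD[OF that] by (auto simp: \<sigma>1_def \<sigma>2_def mem_Times_iff)
  have sinj: "i = i' \<and> j = j'" if "i < k" "j < k" "i' < k" "j' < k" "\<sigma>1 i j = \<sigma>1 i' j'" "\<sigma>2 i j = \<sigma>2 i' j'" for i j i' j'
  proof -
    have "sg (i, j) = sg (i', j')" using that(5,6) by (simp add: \<sigma>1_def \<sigma>2_def prod_eq_iff)
    then have "\<tau> (i, j) = \<tau> (i', j')" using sgD[OF that(1,2)] sgD[OF that(3,4)] by metis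
    then show ?thesis using \<tau> that(1-4) unfolding bij_betw_def inj_on_def by blast
  qed
  have TR: "ncE k p s i j = ncE k p' s' (\<sigma>1 i j) (\<sigma>2 i j)" if "i < k" "j < k" for i j
  proof -
    have "sg (i, j) = (\<sigma>1 i j, \<sigma>2 i j)" by (simp add: \<sigma>1_def \<sigma>2_def)
    then show ?thesis using E[OF that] E'[of "\<sigma>1 i j" "\<sigma>2 i j"] sk[OF that] sgD[OF that] by simp
  qed
  have inj: "inj_on (Sf s) (Dk k)" using bs by (rule bij_betw_imp_inj_on)
  have inj': "inj_on (Sf s') (Dk k)" using bs' by (rule bij_betw_imp_inj_on)
  have img: "Sf s ` Dk k = Sf s' ` Dk k" using bs bs' by (simp add: bij_betw_def)
  obtain t where t: "t \<ge> 2" and a0: "phi p t 0 \<noteq> 0" and b0: "phi p 0 t \<noteq> 0" and ab: "phi p t 0 \<noteq> phi p 0 t"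
    and disj: "real t * phi p t 0 \<noteq> phi p (t - 1) 1
         \<or> real t * phi p 0 t \<noteq> phi p 1 (t - 1)
         \<or> (phi_end p False (t - 1) 1 \<noteq> 0 \<and> phi p t 0 \<noteq> phi_end p False (t - 1) 1)
         \<or> (phi_begin p False (t - 1) 1 \<noteq> 0 \<and> phi p t 0 \<noteq> phi_begin p False (t - 1) 1)
         \<or> (phi_end p True 1 (t - 1) \<noteq> 0 \<and> phi p 0 t \<noteq> phi_end p True 1 (t - 1))
         \<or> (phi_begin p True 1 (t - 1) \<noteq> 0 \<and> phi p 0 t \<noteq> phi_begin p True 1 (t - 1))"
    using assms(4) unfolding classW_def by blast
  have an: "Poly_Mapping.lookup p (replicate t l) \<noteq> 0" for l
    using a0 b0 by (cases l) (simp_all add: phi_t0 phi_0t)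
  have ab': "Poly_Mapping.lookup p (replicate t True) \<noteq> Poly_Mapping.lookup p (replicate t False)"
    using ab by (simp add: phi_t0 phi_0t)
  have HW: "\<not> ((\<forall>i<t. \<forall>l. Poly_Mapping.lookup p (replicate i l @ (\<not> l) # replicate (t - 1 - i) l) = Poly_Mapping.lookup p (replicate t l)))"
  proof
    assume H: "\<forall>i<t. \<forall>l. Poly_Mapping.lookup p (replicate i l @ (\<not> l) # replicate (t - 1 - i) l) = Poly_Mapping.lookup p (replicate t l)"
    have HX: "\<And>i. i < t \<Longrightarrow> Poly_Mapping.lookup p (replicate i True @ False # replicate (t - 1 - i) True) = Poly_Mapping.lookup p (replicate t True)"
      using H by (metis (full_types))
    have HY: "\<And>i. i < t \<Longrightarrow> Poly_Mapping.lookup p (replicate i False @ True # replicate (t - 1 - i) False) = Poly_Mapping.lookup p (replicate t False)"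
      using H by (metis (full_types))
    show False using not_W[OF t HX HY] disj by blast
  qed
  obtain g f \<pi> where \<pi>k: "\<forall>i<k. \<pi> i < k" and \<pi>inj: "inj_on \<pi> {..<k}"
    and fin: "\<forall>i<k. \<forall>j<k. s True i j = s' g (if f then \<pi> j else \<pi> i) (if f then \<pi> i else \<pi> j)
                 \<and> s False i j = s' (\<not> g) (if f then \<pi> j else \<pi> i) (if f then \<pi> i else \<pi> j)"
    using core[OF inj inj' img sk sinj TR t an ab' HW] by blast
  define pe where "pe x = (if x < k then \<pi> x else x)" for x
  have pe_inj: "inj_on pe {..<k}" using \<pi>inj by (auto simp: inj_on_def pe_def)
  have pe_img: "pe ` {..<k} = {..<k}" by (rule endo_inj_surj) (use \<pi>k pe_inj in \<open>auto simp: pe_def\<close>)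
  have pe: "pe permutes {..<k}"
    by (rule bij_imp_permutes) (use pe_inj pe_img in \<open>auto simp: bij_betw_def pe_def\<close>)
  define Q :: "cpoly mat" where "Q = (\<lambda>m i. if inv pe m = i then 1 else 0)"
  have Qp: "is_perm_mat k Q" unfolding Q_def by (rule is_perm_mat_Q[OF pe])
  have CE: "conj_perm k Q A i j = A (\<pi> i) (\<pi> j)" if "i < k" "j < k" for A :: "cpoly mat" and i j
    using conj_perm_eval[OF pe Q_def that] that by (simp add: pe_def)
  show ?thesis
  proof (intro exI[of _ Q] conjI Qp)
    show "let X = var_mat s True; Y = var_mat s False; X' = var_mat s' True; Y' = var_mat s' False in
      (mat_eq k X (conj_perm k Q X') \<and> mat_eq k Y (conj_perm k Q Y'))
    \<or> (mat_eq k X (conj_perm k Q (mat_transpose X')) \<and> mat_eq k Y (conj_perm k Q (mat_transpose Y')))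
    \<or> (mat_eq k X (conj_perm k Q Y') \<and> mat_eq k Y (conj_perm k Q X'))
    \<or> (mat_eq k X (conj_perm k Q (mat_transpose Y')) \<and> mat_eq k Y (conj_perm k Q (mat_transpose X')))"
      unfolding Let_def mat_eq_def using fin
      by (cases g; cases f) (simp_all add: CE var_mat_def mat_transpose_def)
  qed
qed

end
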